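(* For any simple undirected graph $G$, $$n_G(\mathcal{L}_5)=\frac12\sum_{st\in E}\big(g_1(s,t)+g_1(t,s)\big),\qquad g_1(s,t)=\sum_{u\in\Gamma(s)\setminus\{t\}}\Big((k_t-1-a_{ut})(k_u-1-a_{ut})+1-|c(t,u)|\Big).$$
   Context: $a_{ij}$ adjacency entries, $k_x$ degree, $\Gamma(x)$ neighbourhood, $c(t,u)=\Gamma(t)\cap\Gamma(u)$. $\mathcal{L}_5$ is the path on 5 vertices; $n_G(F)$ counts (not necessarily induced) subgraphs isomorphic to $F$. *)

theory Defs
  imports Complex_Main
begin

definition simple_graph :: "'a set \<Rightarrow> ('a \<Rightarrow> 'a \<Rightarrow> bool) \<Rightarrow> bool" where
  "simple_graph V adj \<longleftrightarrow> finite V \<and> (\<forall>x y. adj x y \<longrightarrow> adj y x)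
     \<and> (\<forall>x. \<not> adj x x) \<and> (\<forall>x y. adj x y \<longrightarrow> x \<in> V \<and> y \<in> V)"

definition nbhd :: "'a set \<Rightarrow> ('a \<Rightarrow> 'a \<Rightarrow> bool) \<Rightarrow> 'a \<Rightarrow> 'a set" where
  "nbhd V adj x = {y \<in> V. adj x y}"

definition deg :: "'a set \<Rightarrow> ('a \<Rightarrow> 'a \<Rightarrow> bool) \<Rightarrow> 'a \<Rightarrow> nat" where
  "deg V adj x = card (nbhd V adj x)"

definition aij :: "('a \<Rightarrow> 'a \<Rightarrow> bool) \<Rightarrow> 'a \<Rightarrow> 'a \<Rightarrow> int" where
  "aij adj x y = (if adj x y then 1 else 0)"

definition common_nbhd :: "'a set \<Rightarrow> ('a \<Rightarrow> 'a \<Rightarrow> bool) \<Rightarrow> 'a \<Rightarrow> 'a \<Rightarrow> 'a set" where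
  "common_nbhd V adj t u = nbhd V adj t \<inter> nbhd V adj u"

definition g1 :: "'a set \<Rightarrow> ('a \<Rightarrow> 'a \<Rightarrow> bool) \<Rightarrow> 'a \<Rightarrow> 'a \<Rightarrow> int" where
  "g1 V adj s t = (\<Sum>u \<in> nbhd V adj s - {t}.
      (int (deg V adj t) - 1 - aij adj u t) * (int (deg V adj u) - 1 - aij adj u t)
      + 1 - int (card (common_nbhd V adj t u)))"

text \<open>Subgraphs of G isomorphic to the path L_5 (not necessarily induced). Such a
subgraph has no isolated vertices, so it is determined by its edge set; we collect
the edge sets of all paths on 5 distinct vertices.\<close>
definition L5_subgraphs :: "'a set \<Rightarrow> ('a \<Rightarrow> 'a \<Rightarrow> bool) \<Rightarrow> 'a set set set" where
  "L5_subgraphs V adj = {{{v0, v1}, {v1, v2}, {v2, v3}, {v3, v4}} | v0 v1 v2 v3 v4.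
      distinct [v0, v1, v2, v3, v4] \<and> {v0, v1, v2, v3, v4} \<subseteq> V \<and>
      adj v0 v1 \<and> adj v1 v2 \<and> adj v2 v3 \<and> adj v3 v4}"

definition n_L5 :: "'a set \<Rightarrow> ('a \<Rightarrow> 'a \<Rightarrow> bool) \<Rightarrow> nat" where
  "n_L5 V adj = card (L5_subgraphs V adj)"

definition edges :: "'a set \<Rightarrow> ('a \<Rightarrow> 'a \<Rightarrow> bool) \<Rightarrow> 'a set set" where
  "edges V adj = {{s, t} | s t. s \<in> V \<and> t \<in> V \<and> adj s t}"

end

theory Submission imports Defs begin

lemma dbl_in4: "{a,b} \<in> {{v0,v1},{v1,v2},{v2,v3},{v3,v4}} \<longleftrightarrow>
  (a=v0\<and>b=v1 \<or> a=v1\<and>b=v0 \<or> a=v1\<and>b=v2 \<or> a=v2\<and>b=v1 \<or> a=v2\<and>b=v3 \<or> a=v3\<and>b=v2 \<or> a=v3\<and>b=v4 \<or> a=v4\<and>b=v3)"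
  by (auto simp: doubleton_eq_iff)

lemma path_uniq:
  assumes "distinct [v0,v1,v2,v3,v4::'a]" "distinct [w0,w1,w2,w3,w4]"
   "{{w0,w1},{w1,w2},{w2,w3},{w3,w4}} \<subseteq> {{v0,v1},{v1,v2},{v2,v3},{v3,v4}}"
  shows "[w0,w1,w2,w3,w4] = [v0,v1,v2,v3,v4] \<or> [w0,w1,w2,w3,w4] = [v4,v3,v2,v1,v0]"
proof -
  have a: "{w0,w1} \<in> {{v0,v1},{v1,v2},{v2,v3},{v3,v4}}" 
     and b: "{w1,w2} \<in> {{v0,v1},{v1,v2},{v2,v3},{v3,v4}}"
     and c: "{w2,w3} \<in> {{v0,v1},{v1,v2},{v2,v3},{v3,v4}}"
     and d: "{w3,w4} \<in> {{v0,v1},{v1,v2},{v2,v3},{v3,v4}}"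
    using assms(3) by blast+
  note A = a[unfolded dbl_in4] and B = b[unfolded dbl_in4] and C = c[unfolded dbl_in4] and D = d[unfolded dbl_in4]
  show ?thesis using assms(1,2) A B C D by auto
qed

definition phi :: "'a list \<Rightarrow> 'a set set" where
  "phi xs = {{xs!0,xs!1},{xs!1,xs!2},{xs!2,xs!3},{xs!3,xs!4}}"

lemma card_pairs_neq:
  assumes "finite A" "finite B"
  shows "int (card {(y,x). y \<in> B \<and> x \<in> A \<and> y \<noteq> x}) = int (card B) * int (card A) - int (card (A \<inter> B))"
proof -
  have eq: "{(y,x). y \<in> B \<and> x \<in> A \<and> y \<noteq> x} = B \<times> A - (\<lambda>z. (z,z)) ` (A \<inter> B)" by auto
  have sub: "(\<lambda>z. (z,z)) ` (A \<inter> B) \<subseteq> B \<times> A" by auto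
  have c1: "card ((\<lambda>z. (z,z)) ` (A \<inter> B)) = card (A \<inter> B)"
    by (rule card_image) (auto simp: inj_on_def)
  have "card (B \<times> A - (\<lambda>z. (z,z)) ` (A \<inter> B)) = card (B \<times> A) - card (A \<inter> B)"
    using card_Diff_subset[OF finite_subset[OF sub] sub] assms c1 by simp
  moreover have "card (A \<inter> B) \<le> card (B \<times> A)"
    using card_mono[OF _ sub] assms c1 by simp
  ultimately show ?thesis unfolding eq using assms by (simp add: card_cartesian_product of_nat_diff)
qed

theorem proposition13:
  fixes V :: "'a set" and adj :: "'a \<Rightarrow> 'a \<Rightarrow> bool"
  assumes "simple_graph V adj"
  shows "real (n_L5 V adj) =
    1/2 * (\<Sum>e \<in> edges V adj. (SOME r. \<exists>s t. e = {s, t} \<and> adj s t \<and>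
              r = real_of_int (g1 V adj s t + g1 V adj t s)))"
proof -
  have finV: "finite V" and sym: "\<And>x y. adj x y \<Longrightarrow> adj y x" and irr: "\<And>x. \<not> adj x x"
    and inV: "\<And>x y. adj x y \<Longrightarrow> x \<in> V \<and> y \<in> V"
    using assms unfolding simple_graph_def by blast+
  define N where "N = nbhd V adj"
  have N_iff: "\<And>x y. y \<in> N x \<longleftrightarrow> adj x y" unfolding N_def nbhd_def using inV by auto
  have finN: "\<And>x. finite (N x)" unfolding N_def nbhd_def using finV by auto
  define P where "P = {(s,t). adj s t}"
  have finP: "finite P"
    by (rule finite_subset[of _ "V \<times> V"]) (use inV finV in \<open>auto simp: P_def\<close>)
  define Q where "Q = (\<lambda>s t u. {(y,x). y \<in> N u - {s,t} \<and> x \<in> N t - {s,u} \<and> y \<noteq> x})"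
  define W where "W = Sigma P (\<lambda>(s,t). Sigma (N s - {t}) (\<lambda>u. Q s t u))"
  define f where "f = (\<lambda>((s::'a,t::'a),(u::'a,(y::'a,x::'a))). [y,u,s,t,x])"
  define T where "T = {[v0,v1,v2,v3,v4] | v0 v1 v2 v3 v4. distinct [v0,v1,v2,v3,v4] \<and>
      adj v0 v1 \<and> adj v1 v2 \<and> adj v2 v3 \<and> adj v3 v4}"
  have finQ: "finite (Q s t u)" for s t u
  proof -
    have "Q s t u \<subseteq> N u \<times> N t" unfolding Q_def by auto
    then show ?thesis using finite_subset finN by blast
  qed
  have cardQ: "int (card (Q s t u)) =
      (int (deg V adj t) - 1 - aij adj u t) * (int (deg V adj u) - 1 - aij adj u t)
      + 1 - int (card (common_nbhd V adj t u))"
    if st: "adj s t" and u: "u \<in> N s - {t}" for s t u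
  proof -
    have us: "adj u s" "u \<noteq> s" "u \<noteq> t" "s \<noteq> t" using u st sym irr N_iff by auto
    define A where "A = N t - {s,u}"
    define B where "B = N u - {s,t}"
    have QAB: "Q s t u = {(y,x). y \<in> B \<and> x \<in> A \<and> y \<noteq> x}" unfolding Q_def A_def B_def by auto
    have cA: "int (card A) = int (deg V adj t) - 1 - aij adj u t"
    proof (cases "adj u t")
      case True
      have "card A = card (N t) - 2" unfolding A_def
        using True us st sym N_iff finN by (subst card_Diff_subset) auto
      moreover have "card (N t) \<ge> 2"
      proof -
        have "{s,u} \<subseteq> N t" using True us st sym N_iff by auto
        then have "card {s,u} \<le> card (N t)" using card_mono finN by blast
        then show ?thesis using us by simp
      qed
      ultimately show ?thesis using True by (simp add: aij_def deg_def N_def[symmetric] of_nat_diff)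
    next
      case False
      have "A = N t - {s}" unfolding A_def using False sym N_iff by auto
      moreover have "s \<in> N t" using st sym N_iff by auto
      ultimately have "card A = card (N t) - 1" "card (N t) \<ge> 1"
        using finN card_Diff_singleton by (auto simp: card_gt_0_iff Suc_le_eq)
      then show ?thesis using False by (simp add: aij_def deg_def N_def[symmetric] of_nat_diff)
    qed
    have cB: "int (card B) = int (deg V adj u) - 1 - aij adj u t"
    proof (cases "adj u t")
      case True
      have "card B = card (N u) - 2" unfolding B_def
        using True us st sym N_iff finN by (subst card_Diff_subset) auto
      moreover have "card (N u) \<ge> 2"
      proof -
        have "{s,t} \<subseteq> N u" using True us st sym N_iff by auto
        then have "card {s,t} \<le> card (N u)" using card_mono finN by blast
        then show ?thesis using us by simp
      qed
      ultimately show ?thesis using True by (simp add: aij_def deg_def N_def[symmetric] of_nat_diff)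
    next
      case False
      have "B = N u - {s}" unfolding B_def using False sym N_iff by auto
      moreover have "s \<in> N u" using us N_iff by auto
      ultimately have "card B = card (N u) - 1" "card (N u) \<ge> 1"
        using finN card_Diff_singleton by (auto simp: card_gt_0_iff Suc_le_eq)
      then show ?thesis using False by (simp add: aij_def deg_def N_def[symmetric] of_nat_diff)
    qed
    have cAB: "int (card (A \<inter> B)) = int (card (common_nbhd V adj t u)) - 1"
    proof -
      have "A \<inter> B = common_nbhd V adj t u - {s}"
        unfolding A_def B_def common_nbhd_def N_def[symmetric] using irr N_iff by auto
      moreover have "s \<in> common_nbhd V adj t u"
        unfolding common_nbhd_def N_def[symmetric] using us st sym N_iff by auto
      moreover have "finite (common_nbhd V adj t u)"
        unfolding common_nbhd_def N_def[symmetric] using finN by auto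
      moreover have "card (common_nbhd V adj t u) > 0" using calculation(2,3) card_gt_0_iff by blast
      ultimately show ?thesis by (simp add: of_nat_diff)
    qed
    have "int (card (Q s t u)) = int (card B) * int (card A) - int (card (A \<inter> B))"
      unfolding QAB by (rule card_pairs_neq) (auto simp: A_def B_def finN)
    then show ?thesis using cA cB cAB by (simp add: algebra_simps)
  qed
  have finW2: "finite (Sigma (N s - {t}) (Q s t))" for s t
    using finN finQ by auto
  have cardW: "int (card W) = (\<Sum>(s,t)\<in>P. g1 V adj s t)"
  proof -
    have "card W = (\<Sum>p\<in>P. card ((\<lambda>(s,t). Sigma (N s - {t}) (Q s t)) p))"
      unfolding W_def by (rule card_SigmaI) (use finP finW2 in auto)
    also have "\<dots> = (\<Sum>(s,t)\<in>P. \<Sum>u\<in>N s - {t}. card (Q s t u))"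
      by (rule sum.cong) (auto simp: finN finQ)
    finally have "int (card W) = (\<Sum>(s,t)\<in>P. \<Sum>u\<in>N s - {t}. int (card (Q s t u)))"
      by (simp add: case_prod_beta)
    also have "\<dots> = (\<Sum>(s,t)\<in>P. g1 V adj s t)"
    proof (rule sum.cong)
      fix p assume p: "p \<in> P"
      obtain s t where pst: "p = (s,t)" by fastforce
      have st: "adj s t" using p pst P_def by auto
      have "(\<Sum>u\<in>N s - {t}. int (card (Q s t u))) = g1 V adj s t"
        unfolding g1_def N_def[symmetric] by (rule sum.cong) (use cardQ[OF st] in auto)
      then show "(case p of (s,t) \<Rightarrow> \<Sum>u\<in>N s - {t}. int (card (Q s t u))) =
          (case p of (s,t) \<Rightarrow> g1 V adj s t)" using pst by simp
    qed simp
    finally show ?thesis .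
  qed
  have injf: "inj_on f W" unfolding inj_on_def f_def W_def by auto
  have fW: "f ` W = T"
  proof
    show "f ` W \<subseteq> T"
    proof
      fix xs assume "xs \<in> f ` W"
      then obtain s t u y x where w: "((s,t),(u,(y,x))) \<in> W" and xs: "xs = [y,u,s,t,x]"
        unfolding f_def by auto
      have h: "adj s t" "adj s u" "u \<noteq> t" "adj u y" "y \<noteq> s" "y \<noteq> t" "adj t x" "x \<noteq> s" "x \<noteq> u" "y \<noteq> x"
        using w unfolding W_def P_def Q_def by (auto simp: N_iff)
      have "u \<noteq> s" "s \<noteq> t" "y \<noteq> u" "x \<noteq> t" using h irr by auto
      then show "xs \<in> T" unfolding T_def xs using h sym by auto
    qed
  next
    show "T \<subseteq> f ` W"
    proof
      fix xs assume "xs \<in> T"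
      then obtain v0 v1 v2 v3 v4 where xs: "xs = [v0,v1,v2,v3,v4]" and d: "distinct [v0,v1,v2,v3,v4]"
        and a: "adj v0 v1" "adj v1 v2" "adj v2 v3" "adj v3 v4" unfolding T_def by blast
      have "((v2,v3),(v1,(v0,v4))) \<in> W" unfolding W_def P_def Q_def
        using d a sym by (auto simp: N_iff)
      moreover have "xs = f ((v2,v3),(v1,(v0,v4)))" unfolding f_def xs by simp
      ultimately show "xs \<in> f ` W" by blast
    qed
  qed
  have cardT: "int (card T) = (\<Sum>(s,t)\<in>P. g1 V adj s t)"
    using cardW card_image[OF injf] fW by simp
  have phiT: "phi ` T = L5_subgraphs V adj"
  proof
    show "phi ` T \<subseteq> L5_subgraphs V adj"
    proof
      fix S assume "S \<in> phi ` T"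
      then obtain v0 v1 v2 v3 v4 where S: "S = phi [v0,v1,v2,v3,v4]" and d: "distinct [v0,v1,v2,v3,v4]"
        and a: "adj v0 v1" "adj v1 v2" "adj v2 v3" "adj v3 v4" unfolding T_def by blast
      have sub: "{v0,v1,v2,v3,v4} \<subseteq> V" using a inV by auto
      have "S = {{v0, v1}, {v1, v2}, {v2, v3}, {v3, v4}}" unfolding S phi_def by simp
      then show "S \<in> L5_subgraphs V adj" unfolding L5_subgraphs_def using d a sub by blast
    qed
  next
    show "L5_subgraphs V adj \<subseteq> phi ` T"
    proof
      fix S assume "S \<in> L5_subgraphs V adj"
      then obtain v0 v1 v2 v3 v4 where S: "S = {{v0, v1}, {v1, v2}, {v2, v3}, {v3, v4}}" and d: "distinct [v0,v1,v2,v3,v4]"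
        and a: "adj v0 v1" "adj v1 v2" "adj v2 v3" "adj v3 v4" unfolding L5_subgraphs_def by blast
      have "[v0,v1,v2,v3,v4] \<in> T" unfolding T_def using d a by blast
      moreover have "S = phi [v0,v1,v2,v3,v4]" unfolding S phi_def by simp
      ultimately show "S \<in> phi ` T" by blast
    qed
  qed
  have finW: "finite W" unfolding W_def using finP finN finQ by (auto intro!: finite_SigmaI)
  have finT: "finite T" using finite_imageI[OF finW, of f] fW by simp
  have fiber: "card {ys \<in> T. phi ys = phi xs} = 2" if xs: "xs \<in> T" for xs
  proof -
    obtain v0 v1 v2 v3 v4 where xsv: "xs = [v0,v1,v2,v3,v4]" and d: "distinct [v0,v1,v2,v3,v4]"
        and a: "adj v0 v1" "adj v1 v2" "adj v2 v3" "adj v3 v4" using xs unfolding T_def by blast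
    have "{ys \<in> T. phi ys = phi xs} = {[v0,v1,v2,v3,v4], [v4,v3,v2,v1,v0]}"
    proof
      show "{ys \<in> T. phi ys = phi xs} \<subseteq> {[v0,v1,v2,v3,v4], [v4,v3,v2,v1,v0]}"
      proof
        fix ys assume "ys \<in> {ys \<in> T. phi ys = phi xs}"
        then obtain w0 w1 w2 w3 w4 where ysw: "ys = [w0,w1,w2,w3,w4]" and dw: "distinct [w0,w1,w2,w3,w4]"
          and e: "phi ys = phi xs" unfolding T_def by blast
        have "{{w0,w1},{w1,w2},{w2,w3},{w3,w4}} \<subseteq> {{v0,v1},{v1,v2},{v2,v3},{v3,v4}}"
          using e unfolding ysw xsv phi_def by simp
        from path_uniq[OF d dw this] show "ys \<in> {[v0,v1,v2,v3,v4], [v4,v3,v2,v1,v0]}"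
          using ysw by simp
      qed
    next
      have "[v4,v3,v2,v1,v0] \<in> T" unfolding T_def using d a sym by auto
      moreover have "phi [v4,v3,v2,v1,v0] = phi xs" unfolding xsv phi_def by (simp add: insert_commute)
      ultimately show "{[v0,v1,v2,v3,v4], [v4,v3,v2,v1,v0]} \<subseteq> {ys \<in> T. phi ys = phi xs}"
        using xs xsv by auto
    qed
    moreover have "[v0,v1,v2,v3,v4] \<noteq> [v4,v3,v2,v1,v0]" using d by auto
    ultimately show ?thesis by simp
  qed
  have cardT2: "card T = 2 * card (phi ` T)"
  proof -
    have "card T = (\<Sum>x\<in>T. (1::nat))" by simp
    also have "\<dots> = (\<Sum>S\<in>phi ` T. \<Sum>x\<in>{x \<in> T. phi x = S}. (1::nat))"
      by (rule sum.group[symmetric]) (use finT in auto)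
    also have "\<dots> = (\<Sum>S\<in>phi ` T. 2)"
      by (rule sum.cong) (auto simp: fiber)
    finally show ?thesis by simp
  qed
  define G where "G = (\<lambda>(s,t). real_of_int (g1 V adj s t + g1 V adj t s))"
  define F where "F = (\<lambda>e. (SOME r. \<exists>s t. e = {s, t} \<and> adj s t \<and>
              r = real_of_int (g1 V adj s t + g1 V adj t s)))"
  define h where "h = (\<lambda>(s::'a,t::'a). {s,t})"
  have FG: "F {s,t} = G (s,t)" if "adj s t" for s t
    unfolding F_def G_def prod.case
    by (rule some_equality) (use that in \<open>auto simp: doubleton_eq_iff\<close>)
  have edgesP: "edges V adj = h ` P" unfolding edges_def h_def P_def using inV by auto
  have finE: "finite (edges V adj)" using edgesP finP by simp
  have sumG: "(\<Sum>p\<in>P. G p) = 2 * (\<Sum>e\<in>edges V adj. F e)"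
  proof -
    have "(\<Sum>p\<in>P. G p) = (\<Sum>e\<in>edges V adj. \<Sum>p\<in>{p \<in> P. h p = e}. G p)"
      by (rule sum.group[symmetric]) (use finP finE edgesP in auto)
    also have "\<dots> = (\<Sum>e\<in>edges V adj. 2 * F e)"
    proof (rule sum.cong)
      fix e assume "e \<in> edges V adj"
      then obtain s t where e: "e = {s,t}" and st: "adj s t" using edgesP h_def P_def by auto
      have neq: "s \<noteq> t" using st irr by auto
      have "{p \<in> P. h p = e} = {(s,t),(t,s)}"
        unfolding e h_def P_def using st sym by (auto simp: doubleton_eq_iff)
      then have "(\<Sum>p\<in>{p \<in> P. h p = e}. G p) = G (s,t) + G (t,s)" using neq by simp
      also have "\<dots> = 2 * F e" unfolding e FG[OF st] by (simp add: G_def)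
      finally show "(\<Sum>p\<in>{p \<in> P. h p = e}. G p) = 2 * F e" .
    qed simp
    finally show ?thesis by (simp add: sum_distrib_left)
  qed
  have swapP: "(\<Sum>(s,t)\<in>P. real_of_int (g1 V adj t s)) = (\<Sum>(s,t)\<in>P. real_of_int (g1 V adj s t))"
  proof -
    have "(\<Sum>(s,t)\<in>P. real_of_int (g1 V adj s t)) = (\<Sum>p\<in>prod.swap ` P. (\<lambda>(s,t). real_of_int (g1 V adj s t)) p)"
    proof -
      have "prod.swap ` P = P" unfolding P_def using sym by (auto simp: image_iff)
      then show ?thesis by simp
    qed
    also have "\<dots> = (\<Sum>(s,t)\<in>P. real_of_int (g1 V adj t s))"
      by (subst sum.reindex) (auto simp: case_prod_beta)
    finally show ?thesis by simp
  qed
  have sumG2: "(\<Sum>p\<in>P. G p) = 2 * (\<Sum>(s,t)\<in>P. real_of_int (g1 V adj s t))"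
    unfolding G_def using swapP by (simp add: sum.distrib case_prod_beta)
  have "real (n_L5 V adj) = real (card T) / 2"
    unfolding n_L5_def phiT[symmetric] using cardT2 by simp
  also have "real (card T) = (\<Sum>(s,t)\<in>P. real_of_int (g1 V adj s t))"
    using arg_cong[OF cardT, of real_of_int] by (simp add: case_prod_beta)
  finally show ?thesis using sumG sumG2 unfolding F_def by simp
qed
end
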